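(* Let $T$ be a local, translation-invariant stochastic matrix on $\mathbb{Z}\times\{1,\dots,D\}$ with $\det X(k)\ne0$ for all $k\in[-\pi,\pi]$. Suppose there are positive numbers $\pi_1,\dots,\pi_D>0$ such that, setting $\pi_{i,a}=\pi_a$ for all $i$, the vector $\boldsymbol\pi=(\pi_{i,a})$ is a steady state, $T\boldsymbol\pi=\boldsymbol\pi$, and $T$ satisfies the detailed balance condition $$T_{i,a;j,b}\,\pi_{j,b}=T_{j,b;i,a}\,\pi_{i,a}\quad\text{for all } i,j,a,b .$$ Then $w(T,0)=0$.
   Context: States are pairs $(j,a)$, $j\in\mathbb{Z}$, $a\in\{1,\dots,D\}$. A stochastic matrix is a real matrix $T=(T_{i,a;j,b})$ with $T_{i,a;j,b}\ge0$ and $\sum_{i,a}T_{i,a;j,b}=1$ for all $(j,b)$. It is local if there are $C,\ell>0$ with $T_{i,a;j,b}\le Ce^{-|i-j|/\ell}$ for all sufficiently large $|i-j|$, and translation invariant if $T_{i+1,a;j+1,b}=T_{i,a;j,b}$. The Bloch matrix is $X(k)$ with $X_{a,b}(k)=\sum_{l\in\mathbb{Z}}T_{j+l,a;j,b}e^{-ikl}$, $k\in[-\pi,\pi]$, and $w(T,0)=\int_{-\pi}^{\pi}\frac{dk}{2\pi i}\partial_k\log\det X(k)\in\mathbb{Z}$. *)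

theory Defs
  imports "HOL-Analysis.Analysis"
begin

text \<open>A matrix on the state space Z x {1..D} is a function
  T i a j b = T_{i,a;j,b}; only values with a, b in {1..D} matter.\<close>

type_synonym smat = "int \<Rightarrow> nat \<Rightarrow> int \<Rightarrow> nat \<Rightarrow> real"

definition stochastic :: "nat \<Rightarrow> smat \<Rightarrow> bool" where
  "stochastic D T \<longleftrightarrow>
     (\<forall>i j a b. a \<in> {1..D} \<and> b \<in> {1..D} \<longrightarrow> T i a j b \<ge> 0) \<and>
     (\<forall>j b. b \<in> {1..D} \<longrightarrow>
        ((\<lambda>(i, a). T i a j b) has_sum 1) (UNIV \<times> {1..D}))"

definition local_mat :: "nat \<Rightarrow> smat \<Rightarrow> bool" where
  "local_mat D T \<longleftrightarrow>
     (\<exists>C L. C > 0 \<and> L > 0 \<and> (\<exists>N. \<forall>i j a b. a \<in> {1..D} \<and> b \<in> {1..D} \<and> \<bar>i - j\<bar> \<ge> N \<longrightarrow>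
        T i a j b \<le> C * exp (- real_of_int \<bar>i - j\<bar> / L)))"

definition transl_inv :: "nat \<Rightarrow> smat \<Rightarrow> bool" where
  "transl_inv D T \<longleftrightarrow>
     (\<forall>i j a b. a \<in> {1..D} \<and> b \<in> {1..D} \<longrightarrow> T (i + 1) a (j + 1) b = T i a j b)"

text \<open>Bloch matrix X(k)_{a,b} = sum_l T_{j+l,a;j,b} e^{-ikl} (evaluated at j = 0,
  which is independent of j by translation invariance).\<close>
definition bloch :: "smat \<Rightarrow> real \<Rightarrow> nat \<Rightarrow> nat \<Rightarrow> complex" where
  "bloch T k a b = (\<Sum>\<^sub>\<infinity>l\<in>(UNIV::int set).
      complex_of_real (T l a 0 b) * exp (- \<i> * complex_of_real (k * real_of_int l)))"

definition detD :: "nat \<Rightarrow> (nat \<Rightarrow> nat \<Rightarrow> complex) \<Rightarrow> complex" where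
  "detD D M = (\<Sum>p | p permutes {1..D}. of_int (sign p) * (\<Prod>a\<in>{1..D}. M (p a) a))"

definition bloch_det :: "nat \<Rightarrow> smat \<Rightarrow> real \<Rightarrow> complex" where
  "bloch_det D T k = detD D (bloch T k)"

text \<open>w(T,0) = int_{-pi}^{pi} dk/(2 pi i) d_k log det X(k)
   = (1/(2 pi i)) int_{-pi}^{pi} (det X)'(k) / det X(k) dk.\<close>
definition winding_w :: "nat \<Rightarrow> smat \<Rightarrow> complex" where
  "winding_w D T = integral {-pi..pi}
      (\<lambda>k. vector_derivative (bloch_det D T) (at k) / bloch_det D T k) / (2 * pi * \<i>)"

end

theory Submission
  imports Defs
begin

lemma shift_nat:
  assumes "transl_inv D T" "a \<in> {1..D}" "b \<in> {1..D}"
  shows "T (i + int m) a (j + int m) b = T i a j b"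
proof (induction m arbitrary: i j)
  case 0 then show ?case by simp
next
  case (Suc m)
  have "T (i + int (Suc m)) a (j + int (Suc m)) b = T ((i + int m) + 1) a ((j + int m) + 1) b"
    by (simp add: algebra_simps)
  also have "\<dots> = T (i + int m) a (j + int m) b"
    using assms unfolding transl_inv_def by blast
  finally show ?case using Suc by simp
qed

lemma shift:
  assumes "transl_inv D T" "a \<in> {1..D}" "b \<in> {1..D}"
  shows "T (i + n) a (j + n) b = T i a j b"
proof (cases "n \<ge> 0")
  case True
  then obtain m where "n = int m" using nonneg_int_cases by blast
  then show ?thesis using shift_nat[OF assms] by simp
next
  case False
  define m where "m = nat (-n)"
  then have m: "n = - int m" using False by simp
  have "T ((i + n) + int m) a ((j + n) + int m) b = T (i + n) a (j + n) b"
    using shift_nat[OF assms] by blast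
  then show ?thesis using m by simp
qed

lemma bloch_sym:
  assumes "transl_inv D T" "a \<in> {1..D}" "b \<in> {1..D}"
    and db: "\<forall>i j a b. a \<in> {1..D} \<and> b \<in> {1..D} \<longrightarrow> T i a j b * p b = T j b i a * p a"
  shows "bloch T k a b * complex_of_real (p b) = complex_of_real (p a) * bloch T (-k) b a"
proof -
  define e where "e = (\<lambda>l::int. exp (- \<i> * complex_of_real (k * real_of_int l)))"
  have pt: "complex_of_real (T l a 0 b) * e l * complex_of_real (p b)
      = complex_of_real (p a) * (complex_of_real (T (-l) b 0 a) * e l)" for l
  proof -
    have "T l a 0 b * p b = T 0 b l a * p a" using db assms(2,3) by blast
    also have "T 0 b l a = T (0 + - l) b (l + - l) a"
      using shift[OF assms(1,3,2)] by metis
    finally have "T l a 0 b * p b = T (-l) b 0 a * p a" by simp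
    then have "complex_of_real (T l a 0 b * p b) = complex_of_real (T (-l) b 0 a * p a)" by simp
    then show ?thesis by (simp add: algebra_simps)
  qed
  have "bloch T k a b * complex_of_real (p b)
      = (\<Sum>\<^sub>\<infinity>l\<in>(UNIV::int set). complex_of_real (T l a 0 b) * e l * complex_of_real (p b))"
    unfolding bloch_def e_def by (simp add: infsum_cmult_left')
  also have "\<dots> = (\<Sum>\<^sub>\<infinity>l\<in>(UNIV::int set). complex_of_real (p a) * (complex_of_real (T (-l) b 0 a) * e l))"
    by (intro infsum_cong pt)
  also have "\<dots> = complex_of_real (p a) * (\<Sum>\<^sub>\<infinity>l\<in>(UNIV::int set). complex_of_real (T (-l) b 0 a) * e l)"
    by (simp add: infsum_cmult_right')
  also have "(\<Sum>\<^sub>\<infinity>l\<in>(UNIV::int set). complex_of_real (T (-l) b 0 a) * e l)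
     = (\<Sum>\<^sub>\<infinity>l\<in>uminus ` (UNIV::int set). complex_of_real (T l b 0 a) * e (-l))"
    by (subst infsum_reindex) (auto simp: o_def)
  also have "\<dots> = bloch T (-k) b a"
    unfolding bloch_def e_def by (simp add: surj_def)
  finally show ?thesis .
qed

lemma detD_sim:
  fixes p :: "nat \<Rightarrow> complex"
  assumes p0: "\<forall>a\<in>{1..D}. p a \<noteq> 0"
    and MN: "\<forall>a\<in>{1..D}. \<forall>b\<in>{1..D}. M a b * p b = p a * N b a"
  shows "detD D M = detD D N"
proof -
  let ?S = "{1..D}"
  have key: "(\<Prod>a\<in>?S. M (s a) a) = (\<Prod>b\<in>?S. N (inv s b) b)" if s: "s permutes ?S" for s
  proof -
    have sa: "s a \<in> ?S" if "a \<in> ?S" for a using permutes_in_image[OF s] that by blast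
    have "(\<Prod>a\<in>?S. M (s a) a) = (\<Prod>a\<in>?S. p (s a) * N a (s a) / p a)"
    proof (rule prod.cong[OF refl])
      fix a assume a: "a \<in> ?S"
      have "M (s a) a * p a = p (s a) * N a (s a)" using MN a sa[OF a] by blast
      then show "M (s a) a = p (s a) * N a (s a) / p a" using p0 a by (simp add: field_simps)
    qed
    also have "\<dots> = (\<Prod>a\<in>?S. p (s a)) * (\<Prod>a\<in>?S. N a (s a)) / (\<Prod>a\<in>?S. p a)"
      by (simp add: prod.distrib prod_dividef)
    also have "(\<Prod>a\<in>?S. p (s a)) = (\<Prod>a\<in>?S. p a)"
      using prod.permute[OF s, of p] by (simp add: o_def)
    also have "(\<Prod>a\<in>?S. N a (s a)) = (\<Prod>a\<in>?S. N (inv s (s a)) (s a))"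
      using permutes_inverses(2)[OF s] by simp
    also have "\<dots> = (\<Prod>b\<in>?S. N (inv s b) b)"
      using prod.permute[OF s, of "\<lambda>b. N (inv s b) b"] by (simp add: o_def)
    finally show ?thesis using p0 by simp
  qed
  have "detD D M = (\<Sum>s | s permutes ?S. of_int (sign (inv s)) * (\<Prod>b\<in>?S. N (inv s b) b))"
    unfolding detD_def
  proof (rule sum.cong[OF refl])
    fix s assume "s \<in> {s. s permutes ?S}"
    then have s: "s permutes ?S" by simp
    have "sign (inv s) = sign s"
      by (rule sign_inverse) (use s permutation_permutes in auto)
    then show "of_int (sign s) * (\<Prod>a\<in>?S. M (s a) a) = of_int (sign (inv s)) * (\<Prod>b\<in>?S. N (inv s b) b)"
      using key[OF s] by simp
  qed
  also have "\<dots> = detD D N"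
    unfolding detD_def by (rule sum_permutations_inverse[symmetric])
  finally show ?thesis .
qed

lemma bloch_det_even:
  assumes "transl_inv D T"
    and pos: "\<forall>a\<in>{1..D}. p a > 0"
    and db: "\<forall>i j a b. a \<in> {1..D} \<and> b \<in> {1..D} \<longrightarrow> T i a j b * p b = T j b i a * p a"
  shows "bloch_det D T k = bloch_det D T (-k)"
  unfolding bloch_det_def
  by (rule detD_sim[where p = "\<lambda>a. complex_of_real (p a)"])
     (use pos bloch_sym[OF assms(1) _ _ db] in auto)

lemma odd_integral_zero:
  fixes h :: "real \<Rightarrow> complex"
  assumes "\<And>x. h (-x) = - h x"
  shows "integral {-pi..pi} h = 0"
proof -
  have "integral {-pi..pi} h = integral {-pi..- (-pi)} (\<lambda>x. h (-x))"
    using Henstock_Kurzweil_Integration.integral_reflect_real[of pi "-pi" h] by simp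
  also have "\<dots> = - integral {-pi..pi} h" using assms by simp
  finally show ?thesis by simp
qed

lemma E_deriv:
  "((\<lambda>k. complex_of_real c * exp (- \<i> * complex_of_real (k * real_of_int l))) has_derivative
   (\<lambda>h. h *\<^sub>R (complex_of_real c * exp (- \<i> * complex_of_real (k * real_of_int l)) * (- \<i> * of_int l)))) (at k)"
proof -
  have "((\<lambda>z. complex_of_real c * exp (- \<i> * (z * of_int l))) has_field_derivative
     (complex_of_real c * exp (- \<i> * (complex_of_real k * of_int l)) * (- \<i> * of_int l))) (at (complex_of_real k))"
    by (auto intro!: derivative_eq_intros simp: algebra_simps)
  from has_vector_derivative_real_field[OF this, where s=UNIV]
  show ?thesis by (simp add: has_vector_derivative_def)
qed

lemma summable_n_pow:
  fixes r :: real assumes "0 \<le> r" "r < 1"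
  shows "summable (\<lambda>n. real (Suc n) * r ^ n)"
proof -
  have "summable (\<lambda>n. diffs (\<lambda>n. 1::real) n * r ^ n)"
    by (rule termdiff_converges[where K = 1]) (use assms in \<open>auto intro: summable_geometric\<close>)
  then show ?thesis by (simp add: diffs_def)
qed

lemma entry_diff:
  fixes c :: "int \<Rightarrow> real" and C L :: real and N :: int
  assumes nn: "\<And>l. c l \<ge> 0" and L: "L > 0" and C: "C > 0"
    and bd: "\<And>l. \<bar>l\<bar> \<ge> N \<Longrightarrow> c l \<le> C * exp (- real_of_int \<bar>l\<bar> / L)"
  shows "(\<lambda>k. \<Sum>\<^sub>\<infinity>l\<in>(UNIV::int set). complex_of_real (c l) * exp (- \<i> * complex_of_real (k * real_of_int l))) differentiable (at k0)"
proof -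
  define E where "E l k = complex_of_real (c l) * exp (- \<i> * complex_of_real (k * real_of_int l))" for l k
  define E' where "E' l k = E l k * (- \<i> * of_int l)" for l k
  have normE: "norm (E l k) = c l" for l k
    using nn[of l] by (simp add: E_def norm_mult norm_exp_eq_Re)
  have normE': "norm (E' l k) = c l * \<bar>of_int l\<bar>" for l k
    by (simp add: E'_def norm_mult normE)
  have dE: "(E l has_derivative (\<lambda>h. h *\<^sub>R E' l k)) (at k)" for l k
    unfolding E_def E'_def by (rule E_deriv)
  define u where "u n k = E (int n) k + E (- int n - 1) k" for n k
  define u' where "u' n k = E' (int n) k + E' (- int n - 1) k" for n k
  define M where "M n = (c (int n) + c (- int n - 1)) * real (Suc n)" for n
  define r where "r = exp (- 1 / L)"
  have r0: "0 \<le> r" "r < 1" using L by (auto simp: r_def)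
  have expr: "exp (- real n / L) = r ^ n" for n
    by (simp add: r_def flip: exp_of_nat_mult) 
  have cb1: "c (int n) \<le> C * r ^ n" if "n \<ge> nat N" for n
  proof -
    have "c (int n) \<le> C * exp (- real_of_int \<bar>int n\<bar> / L)" using that by (intro bd) linarith
    then show ?thesis using expr[of n] by simp
  qed
  have cb2: "c (- int n - 1) \<le> C * r ^ n" if "n \<ge> nat N" for n
  proof -
    have "c (- int n - 1) \<le> C * exp (- real_of_int \<bar>- int n - 1\<bar> / L)" using that by (intro bd) linarith
    also have "\<dots> \<le> C * exp (- real n / L)"
      using C L by (simp add: field_simps)
    finally show ?thesis using expr[of n] by simp
  qed
  have sumM: "summable M"
  proof (rule summable_comparison_test_ev)
    show "summable (\<lambda>n. 2 * C * (real (Suc n) * r ^ n))"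
      by (intro summable_mult summable_n_pow r0)
    show "\<forall>\<^sub>F n in sequentially. norm (M n) \<le> 2 * C * (real (Suc n) * r ^ n)"
      unfolding eventually_sequentially
    proof (intro exI allI impI)
      fix n assume "nat N \<le> n"
      with cb1 cb2 have "c (int n) + c (- int n - 1) \<le> 2 * C * r ^ n" by fastforce
      then show "norm (M n) \<le> 2 * C * (real (Suc n) * r ^ n)"
        using nn[of "int n"] nn[of "- int n - 1"] unfolding M_def
        by (simp add: abs_mult)
    qed
  qed
  have Mge: "c (int n) \<le> M n" "c (- int n - 1) \<le> M n" for n
  proof -
    have "0 \<le> c (int n) * real n" "0 \<le> c (- int n - 1) * real n"
      using nn[of "int n"] nn[of "- int n - 1"] by simp_all
    then show "c (int n) \<le> M n" "c (- int n - 1) \<le> M n"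
      unfolding M_def using nn[of "int n"] nn[of "- int n - 1"] by (simp_all add: algebra_simps)
  qed
  have nu': "norm (u' n k) \<le> M n" for n k
  proof -
    have "norm (u' n k) \<le> c (int n) * real n + c (- int n - 1) * real (Suc n)"
      unfolding u'_def using norm_triangle_ineq[of "E' (int n) k" "E' (- int n - 1) k"]
      by (simp add: normE')
    also have "\<dots> \<le> M n" unfolding M_def using nn[of "int n"]
      by (simp add: algebra_simps)
    finally show ?thesis .
  qed
  have nu: "norm (u n k) \<le> M n" for n k
  proof -
    have "norm (u n k) \<le> c (int n) + c (- int n - 1)"
      unfolding u_def using norm_triangle_ineq[of "E (int n) k" "E (- int n - 1) k"]
      by (simp add: normE)
    also have "\<dots> \<le> M n" unfolding M_def using nn[of "int n"] nn[of "- int n - 1"]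
      by (simp add: algebra_simps)
    finally show ?thesis .
  qed
  define G where "G k = suminf (\<lambda>i. u' i k)" for k
  have ul: "uniform_limit UNIV (\<lambda>n k. \<Sum>i<n. u' i k) G sequentially"
    unfolding G_def by (rule Weierstrass_m_test[OF _ sumM]) (rule nu')
  have sum_u: "summable (\<lambda>n. u n k)" for k
    by (rule summable_comparison_test[OF _ sumM]) (use nu in auto)
  obtain g where g: "\<And>k. (\<lambda>n. u n k) sums g k \<and> (g has_derivative (\<lambda>h. h *\<^sub>R G k)) (at k)"
  proof -
    have "\<exists>g. \<forall>k\<in>UNIV. (\<lambda>n. u n k) sums g k \<and> (g has_derivative (\<lambda>h. h *\<^sub>R G k)) (at k within UNIV)"
    proof (rule has_derivative_series[where f' = "\<lambda>n k h. h *\<^sub>R u' n k"])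
      show "convex (UNIV :: real set)" by simp
      show "(u n has_derivative (\<lambda>h. h *\<^sub>R u' n k)) (at k within UNIV)" for n k
        unfolding u_def u'_def using dE
        by (auto intro!: derivative_eq_intros simp: scaleR_add_right)
      show "(\<lambda>n. u n 0) sums (suminf (\<lambda>n. u n 0))" using sum_u by (rule summable_sums)
      show "\<forall>\<^sub>F n in sequentially. \<forall>k\<in>UNIV. \<forall>h. norm ((\<Sum>i<n. h *\<^sub>R u' i k) - h *\<^sub>R G k) \<le> e * norm h"
        if e: "e > 0" for e
      proof -
        have "\<forall>\<^sub>F n in sequentially. \<forall>k\<in>UNIV. dist (\<Sum>i<n. u' i k) (G k) < e"
          using uniform_limitD[OF ul e] .
        then show ?thesis
        proof (rule eventually_mono)
          fix n assume H: "\<forall>k\<in>UNIV. dist (\<Sum>i<n. u' i k) (G k) < e"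
          show "\<forall>k\<in>UNIV. \<forall>h. norm ((\<Sum>i<n. h *\<^sub>R u' i k) - h *\<^sub>R G k) \<le> e * norm h"
          proof (intro ballI allI)
            fix k :: real and h :: real assume "k \<in> UNIV"
            have "norm ((\<Sum>i<n. h *\<^sub>R u' i k) - h *\<^sub>R G k) = \<bar>h\<bar> * norm ((\<Sum>i<n. u' i k) - G k)"
              by (simp flip: scaleR_sum_right scaleR_diff_right)
            also have "\<dots> \<le> \<bar>h\<bar> * e"
              using H by (intro mult_left_mono) (auto simp: dist_norm less_imp_le)
            finally show "norm ((\<Sum>i<n. h *\<^sub>R u' i k) - h *\<^sub>R G k) \<le> e * norm h"
              by (simp add: mult.commute)
          qed
        qed
      qed
    qed simp
    then show thesis using that by auto
  qed
  have Fg: "(\<Sum>\<^sub>\<infinity>l\<in>(UNIV::int set). E l k) = g k" for k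
  proof -
    have s1: "summable (\<lambda>n. E (int n) k)" "summable (\<lambda>n. norm (E (int n) k))"
      by (rule summable_comparison_test[OF _ sumM]; use Mge normE nn in simp)+
    have s2: "summable (\<lambda>n. E (- int n - 1) k)" "summable (\<lambda>n. norm (E (- int n - 1) k))"
      by (rule summable_comparison_test[OF _ sumM]; use Mge normE nn in simp)+
    have h1: "((\<lambda>n. E (int n) k) has_sum suminf (\<lambda>n. E (int n) k)) UNIV"
      by (rule norm_summable_imp_has_sum[OF s1(2) summable_sums[OF s1(1)]])
    have h2: "((\<lambda>n. E (- int n - 1) k) has_sum suminf (\<lambda>n. E (- int n - 1) k)) UNIV"
      by (rule norm_summable_imp_has_sum[OF s2(2) summable_sums[OF s2(1)]])
    have H1: "((\<lambda>l. E l k) has_sum suminf (\<lambda>n. E (int n) k)) (range int)"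
      by (subst has_sum_reindex) (use h1 in \<open>auto simp: o_def inj_on_def\<close>)
    have H2: "((\<lambda>l. E l k) has_sum suminf (\<lambda>n. E (- int n - 1) k)) (range (\<lambda>n. - int n - 1))"
      by (subst has_sum_reindex) (use h2 in \<open>auto simp: o_def inj_on_def\<close>)
    have U: "range int \<union> range (\<lambda>n. - int n - 1) = (UNIV :: int set)"
    proof (intro set_eqI iffI)
      fix l :: int
      show "l \<in> range int \<union> range (\<lambda>n. - int n - 1)"
      proof (cases "l \<ge> 0")
        case True then have "l = int (nat l)" by simp
        then show ?thesis by blast
      next
        case False then have "l = - int (nat (- l - 1)) - 1" by simp
        then show ?thesis by blast
      qed
    qed auto
    have "((\<lambda>l. E l k) has_sum (suminf (\<lambda>n. E (int n) k) + suminf (\<lambda>n. E (- int n - 1) k))) UNIV"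
      using has_sum_Un_disjoint[OF H1 H2] U by force
    moreover have "suminf (\<lambda>n. E (int n) k) + suminf (\<lambda>n. E (- int n - 1) k) = g k"
    proof -
      have "(\<lambda>n. u n k) sums (suminf (\<lambda>n. E (int n) k) + suminf (\<lambda>n. E (- int n - 1) k))"
        unfolding u_def by (intro sums_add summable_sums s1(1) s2(1))
      then show ?thesis using g[of k] sums_unique2 by blast
    qed
    ultimately show ?thesis by (simp add: infsumI)
  qed
  have "(\<lambda>k. \<Sum>\<^sub>\<infinity>l\<in>(UNIV::int set). E l k) = g" using Fg by auto
  then have "(\<lambda>k. \<Sum>\<^sub>\<infinity>l\<in>(UNIV::int set). E l k) differentiable (at k0)"
    using g[of k0] unfolding differentiable_def by auto
  then show ?thesis unfolding E_def .
qed

lemma differentiable_prod':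
  fixes f :: "'i \<Rightarrow> real \<Rightarrow> complex"
  assumes "\<And>i. i \<in> I \<Longrightarrow> f i differentiable (at x)"
  shows "(\<lambda>x. \<Prod>i\<in>I. f i x) differentiable (at x)"
proof -
  have "\<forall>i\<in>I. \<exists>d. (f i has_derivative d) (at x)" using assms unfolding differentiable_def by blast
  then have "\<exists>F. \<forall>i\<in>I. (f i has_derivative F i) (at x)" by (rule bchoice)
  then obtain F where F: "\<forall>i\<in>I. (f i has_derivative F i) (at x)" by blast
  show ?thesis unfolding differentiable_def
    by (rule exI, rule has_derivative_prod) (use F in blast)
qed

theorem mainTheorem9:
  fixes D :: nat and T :: smat and p :: "nat \<Rightarrow> real"
  assumes "D \<ge> 1"
    and "stochastic D T" and "local_mat D T" and "transl_inv D T"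
    and "\<forall>k\<in>{-pi..pi}. bloch_det D T k \<noteq> 0"
    and "\<forall>a\<in>{1..D}. p a > 0"
    and "\<forall>i a. a \<in> {1..D} \<longrightarrow>
           ((\<lambda>(j, b). T i a j b * p b) has_sum p a) (UNIV \<times> {1..D})"
    and "\<forall>i j a b. a \<in> {1..D} \<and> b \<in> {1..D} \<longrightarrow> T i a j b * p b = T j b i a * p a"
  shows "winding_w D T = 0"
proof -
  obtain C L N where CL: "C > 0" "L > 0"
    and bd: "\<forall>i j a b. a \<in> {1..D} \<and> b \<in> {1..D} \<and> \<bar>i - j\<bar> \<ge> N \<longrightarrow>
        T i a j b \<le> C * exp (- real_of_int \<bar>i - j\<bar> / L)"
    using assms(3) unfolding local_mat_def by blast
  have nn: "\<forall>i j a b. a \<in> {1..D} \<and> b \<in> {1..D} \<longrightarrow> T i a j b \<ge> 0"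
    using assms(2) unfolding stochastic_def by blast
  have ent: "(\<lambda>k. bloch T k a b) differentiable (at k0)" if ab: "a \<in> {1..D}" "b \<in> {1..D}" for a b k0
    unfolding bloch_def
  proof (rule entry_diff[where C = C and L = L and N = N])
    show "0 \<le> T l a 0 b" for l using nn ab by blast
    show "T l a 0 b \<le> C * exp (- real_of_int \<bar>l\<bar> / L)" if "N \<le> \<bar>l\<bar>" for l
      using bd[rule_format, of a b l 0] ab that by simp
  qed (use CL in auto)
  define f where "f = bloch_det D T"
  have fd: "f differentiable (at k)" for k
    unfolding f_def bloch_det_def detD_def
  proof (intro differentiable_sum ballI finite_permutations finite_atLeastAtMost)
    fix s assume "s \<in> {s. s permutes {1..D}}"
    then have s: "s permutes {1..D}" by simp
    have "(\<lambda>k. \<Prod>a\<in>{1..D}. bloch T k (s a) a) differentiable (at k)"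
      by (rule differentiable_prod') (use ent permutes_in_image[OF s] in blast)
    then show "(\<lambda>k. of_int (sign s) * (\<Prod>a\<in>{1..D}. bloch T k (s a) a)) differentiable (at k)"
      by (intro differentiable_mult) auto
  qed
  have even: "f (- k) = f k" for k
    unfolding f_def by (rule bloch_det_even[OF assms(4,6,8), symmetric])
  have vd: "vector_derivative f (at (- k)) = - vector_derivative f (at k)" for k
  proof -
    have d: "(f has_vector_derivative vector_derivative f (at k)) (at (- (- k)))"
      using fd[of k] vector_derivative_works[of f "at k"] by simp
    have m: "(uminus has_vector_derivative (-1::real)) (at (- k))"
      by (auto intro!: derivative_eq_intros)
    have "((f \<circ> uminus) has_vector_derivative ((-1::real) *\<^sub>R vector_derivative f (at k))) (at (- k))"
      using vector_diff_chain_at[OF m] d by simp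
    moreover have "f \<circ> uminus = f" using even by (auto simp: o_def)
    ultimately have "(f has_vector_derivative - vector_derivative f (at k)) (at (- k))" by simp
    then show ?thesis by (rule vector_derivative_at)
  qed
  have "integral {-pi..pi} (\<lambda>k. vector_derivative f (at k) / f k) = 0"
    by (rule odd_integral_zero) (simp add: vd even)
  then show ?thesis unfolding winding_w_def f_def by simp
qed

end
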